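(* Let $r,s$ be integers with $s\ge 3$ and $s-r+1=0$, and let $G=(K_r\cup\overline{K_s})\vee\{v\}$, i.e. the graph obtained from the disjoint union of a complete graph on $r$ vertices and an edgeless graph on $s$ vertices by adding one new vertex $v$ adjacent to all $r+s$ of these vertices. Then $\mathrm{mur}(G)=3$.
   Context: For a finite simple undirected graph $G$ on vertices $v_1,\dots,v_n$, let $A_G$ be its $(0,1)$-adjacency matrix, $D_G=\mathrm{diag}(d_1,\dots,d_n)$ with $d_i$ the degree of $v_i$, $I$ the $n\times n$ identity matrix and $J$ the $n\times n$ all-ones matrix. A universal adjacency matrix of $G$ is any matrix $\alpha A_G+\beta I+\gamma J+\delta D_G$ with real scalars $\alpha,\beta,\gamma,\delta$ and $\alpha\neq 0$. The minimum universal rank $\mathrm{mur}(G)$ is the minimum rank over all universal adjacency matrices of $G$. *)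

theory Defs
  imports "Jordan_Normal_Form.DL_Rank"
begin

text \<open>A finite simple graph on vertex set {0..<n} is given by an adjacency
  predicate; only its values on {0..<n} matter.\<close>

definition simple_graph :: "nat \<Rightarrow> (nat \<Rightarrow> nat \<Rightarrow> bool) \<Rightarrow> bool" where
  "simple_graph n E \<longleftrightarrow> (\<forall>i<n. \<forall>j<n. E i j = E j i) \<and> (\<forall>i<n. \<not> E i i)"

definition adj_mat :: "nat \<Rightarrow> (nat \<Rightarrow> nat \<Rightarrow> bool) \<Rightarrow> real mat" where
  "adj_mat n E = mat n n (\<lambda>(i,j). if E i j then 1 else 0)"

definition degree :: "nat \<Rightarrow> (nat \<Rightarrow> nat \<Rightarrow> bool) \<Rightarrow> nat \<Rightarrow> nat" where
  "degree n E i = card {j. j < n \<and> E i j}"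

definition deg_mat :: "nat \<Rightarrow> (nat \<Rightarrow> nat \<Rightarrow> bool) \<Rightarrow> real mat" where
  "deg_mat n E = mat n n (\<lambda>(i,j). if i = j then real (degree n E i) else 0)"

definition ones_mat :: "nat \<Rightarrow> real mat" where
  "ones_mat n = mat n n (\<lambda>_. 1)"

definition univ_adj_mat ::
  "nat \<Rightarrow> (nat \<Rightarrow> nat \<Rightarrow> bool) \<Rightarrow> real \<Rightarrow> real \<Rightarrow> real \<Rightarrow> real \<Rightarrow> real mat" where
  "univ_adj_mat n E \<alpha> \<beta> \<gamma> \<delta> =
     \<alpha> \<cdot>\<^sub>m adj_mat n E + \<beta> \<cdot>\<^sub>m 1\<^sub>m n + \<gamma> \<cdot>\<^sub>m ones_mat n + \<delta> \<cdot>\<^sub>m deg_mat n E"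

definition mat_rank :: "real mat \<Rightarrow> nat" where
  "mat_rank A = vec_space.rank (dim_row A) A"

definition mur :: "nat \<Rightarrow> (nat \<Rightarrow> nat \<Rightarrow> bool) \<Rightarrow> nat" where
  "mur n E = (LEAST k. \<exists>\<alpha> \<beta> \<gamma> \<delta>. \<alpha> \<noteq> 0 \<and> mat_rank (univ_adj_mat n E \<alpha> \<beta> \<gamma> \<delta>) = k)"

text \<open>The graph (K_r \<union> complement of K_s) joined with a vertex v, on vertices {0..<r+s+1}:
  0..r-1 form the clique K_r, r..r+s-1 the independent set, and r+s is v.\<close>
definition join_graph :: "nat \<Rightarrow> nat \<Rightarrow> nat \<Rightarrow> nat \<Rightarrow> bool" where
  "join_graph r s i j \<longleftrightarrow> i \<noteq> j \<and> ((i < r \<and> j < r) \<or> i = r + s \<or> j = r + s)"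

lemma simple_graph_join_graph: "simple_graph (r + s + 1) (join_graph r s)"
  unfolding simple_graph_def join_graph_def by auto

end

theory Submission
  imports Defs "Jordan_Normal_Form.DL_Rank_Submatrix"
begin


lemma degree_join:
  assumes "i < 2*m+2"
  shows "degree (2*m+2) (join_graph (Suc m) m) i =
     (if i \<le> m then Suc m else if i = 2*m+1 then 2*m+1 else 1)"
proof -
  consider "i \<le> m" | "i = 2*m+1" | "m < i" "i < 2*m+1" using assms by linarith
  then show ?thesis
  proof cases
    case 1
    have "{j. j < 2*m+2 \<and> join_graph (Suc m) m i j} = insert (2*m+1) ({..<Suc m} - {i})"
      using 1 unfolding join_graph_def by auto
    moreover have "card (insert (2*m+1) ({..<Suc m} - {i})) = Suc m" using 1 by simp
    ultimately show ?thesis using 1 by (simp add: degree_def)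
  next
    case 2
    have "{j. j < 2*m+2 \<and> join_graph (Suc m) m i j} = {..<2*m+1}"
      using 2 unfolding join_graph_def by auto
    then show ?thesis using 2 by (simp add: degree_def)
  next
    case 3
    have "{j. j < 2*m+2 \<and> join_graph (Suc m) m i j} = {2*m+1}"
      using 3 unfolding join_graph_def by auto
    then show ?thesis using 3 by (simp add: degree_def)
  qed
qed

lemma entry:
  assumes "i < 2*m+2" "j < 2*m+2"
  shows "univ_adj_mat (2*m+2) (join_graph (Suc m) m) \<alpha> \<beta> \<gamma> \<delta> $$ (i,j) =
   (if i = j then (if i \<le> m then \<beta>+\<gamma>+\<delta>*(m+1) else if i = 2*m+1 then \<beta>+\<gamma>+\<delta>*(2*m+1) else \<beta>+\<gamma>+\<delta>)
    else if (i \<le> m \<and> j \<le> m) \<or> i = 2*m+1 \<or> j = 2*m+1 then \<alpha>+\<gamma> else \<gamma>)"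
  using assms degree_join[OF assms(1)]
  by (auto simp: univ_adj_mat_def adj_mat_def ones_mat_def deg_mat_def join_graph_def)

lemma dims: "univ_adj_mat n E \<alpha> \<beta> \<gamma> \<delta> \<in> carrier_mat n n"
  by (simp add: univ_adj_mat_def adj_mat_def ones_mat_def deg_mat_def)

lemma pick3:
  assumes "a < b" "b < (c::nat)"
  shows "pick {a,b,c} 0 = a" "pick {a,b,c} 1 = b" "pick {a,b,c} 2 = c"
proof -
  show 0: "pick {a,b,c} 0 = a" using assms by (auto intro!: Least_equality)
  show 1: "pick {a,b,c} 1 = b" using assms 0 by (auto intro!: Least_equality)
  show "pick {a,b,c} 2 = c" using assms 1 by (auto simp: numeral_2_eq_2 intro!: Least_equality)
qed


lemma det1: fixes C :: "'a::comm_ring_1 mat" assumes "C \<in> carrier_mat 1 1" shows "det C = C$$(0,0)"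
proof -
  have "det (mat_delete C 0 0) = 1" using mat_delete_carrier[OF assms, of 0 0] by (intro det_dim_zero) simp
  thus ?thesis using laplace_expansion_row[OF assms, of 0] by (simp add: cofactor_def)
qed

lemma det2: fixes B :: "'a::comm_ring_1 mat" assumes "B \<in> carrier_mat 2 2"
  shows "det B = B$$(0,0)*B$$(1,1) - B$$(0,1)*B$$(1,0)"
proof -
  have c: "mat_delete B 0 j \<in> carrier_mat 1 1" for j using mat_delete_carrier[OF assms] by simp
  have e: "det (mat_delete B 0 j) = B$$(1, if 0 < j then 0 else 1)" for j
    using det1[OF c] assms by (simp add: mat_delete_def)
  have s: "{..<2::nat} = {0,1}" by auto
  show ?thesis using laplace_expansion_row[OF assms, of 0] by (simp add: cofactor_def e s)
qed

lemma det3: fixes A :: "'a::comm_ring_1 mat" assumes "A \<in> carrier_mat 3 3"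
  shows "det A = A$$(0,0)*A$$(1,1)*A$$(2,2) - A$$(0,0)*A$$(1,2)*A$$(2,1)
   - A$$(0,1)*A$$(1,0)*A$$(2,2) + A$$(0,1)*A$$(1,2)*A$$(2,0)
   + A$$(0,2)*A$$(1,0)*A$$(2,1) - A$$(0,2)*A$$(1,1)*A$$(2,0)"
proof -
  have c: "mat_delete A 0 j \<in> carrier_mat 2 2" for j using mat_delete_carrier[OF assms] by simp
  have e: "det (mat_delete A 0 j) = A$$(1, if 0 < j then 0 else 1) * A$$(2, if 1 < j then 1 else 2)
      - A$$(1, if 1 < j then 1 else 2) * A$$(2, if 0 < j then 0 else 1)" for j
    using det2[OF c] assms by (simp add: mat_delete_def numeral_2_eq_2)
  have s: "{..<3::nat} = {0,1,2}" by auto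
  show ?thesis using laplace_expansion_row[OF assms, of 0] by (simp add: cofactor_def e s algebra_simps)
qed


lemma minor3:
  fixes A :: "real mat"
  assumes A: "A \<in> carrier_mat n n" and i: "i0<i1" "i1<i2" "i2<n" and j: "j0<j1" "j1<j2" "j2<n"
  and d: "A$$(i0,j0)*A$$(i1,j1)*A$$(i2,j2) - A$$(i0,j0)*A$$(i1,j2)*A$$(i2,j1)
   - A$$(i0,j1)*A$$(i1,j0)*A$$(i2,j2) + A$$(i0,j1)*A$$(i1,j2)*A$$(i2,j0)
   + A$$(i0,j2)*A$$(i1,j0)*A$$(i2,j1) - A$$(i0,j2)*A$$(i1,j1)*A$$(i2,j0) \<noteq> 0"
  shows "3 \<le> vec_space.rank n A"
proof -
  let ?S = "submatrix A {i0,i1,i2} {j0,j1,j2}"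
  have ci: "{i. i<n \<and> i\<in>{i0,i1,i2}} = {i0,i1,i2}" "{i. i<n \<and> i\<in>{j0,j1,j2}} = {j0,j1,j2}" using i j by auto
  have cc: "card {i0,i1,i2} = 3" "card {j0,j1,j2} = 3" using i j by auto
  have dA: "dim_row A = n" "dim_col A = n" using A by auto
  have s1: "{i. i<dim_row A \<and> i\<in>{i0,i1,i2}} = {i0,i1,i2}" using i dA by auto
  have s2: "{i. i<dim_col A \<and> i\<in>{j0,j1,j2}} = {j0,j1,j2}" using j dA by auto
  have ds: "dim_row ?S = 3" "dim_col ?S = 3" unfolding dim_submatrix s1 s2 cc by (rule refl)+
  have Sc: "?S \<in> carrier_mat 3 3" by (rule carrier_matI[OF ds])
  have e: "?S $$ (x,y) = A $$ (pick {i0,i1,i2} x, pick {j0,j1,j2} y)" if "x < 3" "y < 3" for x y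
    unfolding submatrix_def s1 s2 cc using that by (simp only: index_mat prod.case)
  have p: "pick {i0,i1,i2} 0 = i0" "pick {i0,i1,i2} 1 = i1" "pick {i0,i1,i2} 2 = i2"
     "pick {j0,j1,j2} 0 = j0" "pick {j0,j1,j2} 1 = j1" "pick {j0,j1,j2} 2 = j2"
    using pick3[OF i(1,2)] pick3[OF j(1,2)] by auto
  have l: "(0::nat) < 3" "(1::nat) < 3" "(2::nat) < 3" by auto
  have "det ?S \<noteq> 0" using d unfolding det3[OF Sc] e[OF l(1) l(1)] e[OF l(1) l(2)] e[OF l(1) l(3)]
     e[OF l(2) l(1)] e[OF l(2) l(2)] e[OF l(2) l(3)] e[OF l(3) l(1)] e[OF l(3) l(2)] e[OF l(3) l(3)] p .
  from vec_space.rank_gt_minor[OF A this] show ?thesis using ci cc by simp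
qed



lemma lower:
  assumes m: "m \<ge> 3" and al: "\<alpha> \<noteq> 0"
  shows "3 \<le> mat_rank (univ_adj_mat (2*m+2) (join_graph (Suc m) m) \<alpha> \<beta> \<gamma> \<delta>)"
proof -
  let ?A = "univ_adj_mat (2*m+2) (join_graph (Suc m) m) \<alpha> \<beta> \<gamma> \<delta>"
  have A: "?A \<in> carrier_mat (2*m+2) (2*m+2)" by (rule dims)
  have mr: "mat_rank ?A = vec_space.rank (2*m+2) ?A" unfolding mat_rank_def using A by simp
  define a where "a = \<alpha> + \<gamma>"
  define c where "c = \<gamma>"
  define p where "p = \<beta>+\<gamma>+\<delta>*(m+1)"
  define q where "q = \<beta>+\<gamma>+\<delta>"
  define w where "w = \<beta>+\<gamma>+\<delta>*(2*m+1)"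
  have w: "w = 2*p - q" unfolding w_def p_def q_def by (simp add: algebra_simps)
  have ac: "a \<noteq> c" using al unfolding a_def c_def by simp
  have E: "?A$$(0,0) = p" "?A$$(0,2) = a" "?A$$(0,2*m+1) = a" "?A$$(0,m+1) = c" "?A$$(0,m+3) = c" "?A$$(1,0) = a" "?A$$(1,2) = a" "?A$$(1,2*m+1) = a" "?A$$(1,m+1) = c" "?A$$(2*m+1,0) = a" "?A$$(2*m+1,2*m+1) = w" "?A$$(2*m+1,m+1) = a" "?A$$(m+1,0) = c" "?A$$(m+1,2) = c" "?A$$(m+1,2*m+1) = a" "?A$$(m+1,m+1) = q" "?A$$(m+1,m+3) = c" "?A$$(m+2,0) = c" "?A$$(m+2,2*m+1) = a" "?A$$(m+2,m+1) = c" "?A$$(m+2,m+3) = c"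
    using m unfolding a_def c_def p_def q_def w_def by ((subst entry; simp)+)
  have K1: "p = a \<Longrightarrow> q = c \<Longrightarrow> ?A$$(0,0)*?A$$(m+1,m+1)*?A$$(2*m+1,2*m+1) - ?A$$(0,0)*?A$$(m+1,2*m+1)*?A$$(2*m+1,m+1) - ?A$$(0,m+1)*?A$$(m+1,0)*?A$$(2*m+1,2*m+1) + ?A$$(0,m+1)*?A$$(m+1,2*m+1)*?A$$(2*m+1,0) + ?A$$(0,2*m+1)*?A$$(m+1,0)*?A$$(2*m+1,m+1) - ?A$$(0,2*m+1)*?A$$(m+1,m+1)*?A$$(2*m+1,0) = - ((a - c) ^ 3)"
    unfolding E w by (simp add: power3_eq_cube algebra_simps)
  have R1: "?A$$(0,0)*?A$$(m+1,m+1)*?A$$(2*m+1,2*m+1) - ?A$$(0,0)*?A$$(m+1,2*m+1)*?A$$(2*m+1,m+1) - ?A$$(0,m+1)*?A$$(m+1,0)*?A$$(2*m+1,2*m+1) + ?A$$(0,m+1)*?A$$(m+1,2*m+1)*?A$$(2*m+1,0) + ?A$$(0,2*m+1)*?A$$(m+1,0)*?A$$(2*m+1,m+1) - ?A$$(0,2*m+1)*?A$$(m+1,m+1)*?A$$(2*m+1,0) \<noteq> 0 \<Longrightarrow> 3 \<le> vec_space.rank (2*m+2) ?A"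
    by (rule minor3[OF A]) (use m in simp_all)
  have K2: "?A$$(0,0)*?A$$(1,2)*?A$$(m+1,2*m+1) - ?A$$(0,0)*?A$$(1,2*m+1)*?A$$(m+1,2) - ?A$$(0,2)*?A$$(1,0)*?A$$(m+1,2*m+1) + ?A$$(0,2)*?A$$(1,2*m+1)*?A$$(m+1,0) + ?A$$(0,2*m+1)*?A$$(1,0)*?A$$(m+1,2) - ?A$$(0,2*m+1)*?A$$(1,2)*?A$$(m+1,0) = (p-a)*a*(a-c)"
    unfolding E by (simp add: algebra_simps power2_eq_square)
  have R2: "?A$$(0,0)*?A$$(1,2)*?A$$(m+1,2*m+1) - ?A$$(0,0)*?A$$(1,2*m+1)*?A$$(m+1,2) - ?A$$(0,2)*?A$$(1,0)*?A$$(m+1,2*m+1) + ?A$$(0,2)*?A$$(1,2*m+1)*?A$$(m+1,0) + ?A$$(0,2*m+1)*?A$$(1,0)*?A$$(m+1,2) - ?A$$(0,2*m+1)*?A$$(1,2)*?A$$(m+1,0) \<noteq> 0 \<Longrightarrow> 3 \<le> vec_space.rank (2*m+2) ?A"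
    by (rule minor3[OF A]) (use m in simp_all)
  have K3: "?A$$(0,0)*?A$$(1,2)*?A$$(m+1,m+1) - ?A$$(0,0)*?A$$(1,m+1)*?A$$(m+1,2) - ?A$$(0,2)*?A$$(1,0)*?A$$(m+1,m+1) + ?A$$(0,2)*?A$$(1,m+1)*?A$$(m+1,0) + ?A$$(0,m+1)*?A$$(1,0)*?A$$(m+1,2) - ?A$$(0,m+1)*?A$$(1,2)*?A$$(m+1,0) = (p-a)*(a*q - c ^ 2)"
    unfolding E by (simp add: algebra_simps power2_eq_square)
  have R3: "?A$$(0,0)*?A$$(1,2)*?A$$(m+1,m+1) - ?A$$(0,0)*?A$$(1,m+1)*?A$$(m+1,2) - ?A$$(0,2)*?A$$(1,0)*?A$$(m+1,m+1) + ?A$$(0,2)*?A$$(1,m+1)*?A$$(m+1,0) + ?A$$(0,m+1)*?A$$(1,0)*?A$$(m+1,2) - ?A$$(0,m+1)*?A$$(1,2)*?A$$(m+1,0) \<noteq> 0 \<Longrightarrow> 3 \<le> vec_space.rank (2*m+2) ?A"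
    by (rule minor3[OF A]) (use m in simp_all)
  have K4: "?A$$(0,0)*?A$$(m+1,m+1)*?A$$(m+2,2*m+1) - ?A$$(0,0)*?A$$(m+1,2*m+1)*?A$$(m+2,m+1) - ?A$$(0,m+1)*?A$$(m+1,0)*?A$$(m+2,2*m+1) + ?A$$(0,m+1)*?A$$(m+1,2*m+1)*?A$$(m+2,0) + ?A$$(0,2*m+1)*?A$$(m+1,0)*?A$$(m+2,m+1) - ?A$$(0,2*m+1)*?A$$(m+1,m+1)*?A$$(m+2,0) = a*(q-c)*(p-c)"
    unfolding E by (simp add: algebra_simps power2_eq_square)
  have R4: "?A$$(0,0)*?A$$(m+1,m+1)*?A$$(m+2,2*m+1) - ?A$$(0,0)*?A$$(m+1,2*m+1)*?A$$(m+2,m+1) - ?A$$(0,m+1)*?A$$(m+1,0)*?A$$(m+2,2*m+1) + ?A$$(0,m+1)*?A$$(m+1,2*m+1)*?A$$(m+2,0) + ?A$$(0,2*m+1)*?A$$(m+1,0)*?A$$(m+2,m+1) - ?A$$(0,2*m+1)*?A$$(m+1,m+1)*?A$$(m+2,0) \<noteq> 0 \<Longrightarrow> 3 \<le> vec_space.rank (2*m+2) ?A"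
    by (rule minor3[OF A]) (use m in simp_all)
  have K5: "?A$$(0,0)*?A$$(m+1,m+1)*?A$$(m+2,m+3) - ?A$$(0,0)*?A$$(m+1,m+3)*?A$$(m+2,m+1) - ?A$$(0,m+1)*?A$$(m+1,0)*?A$$(m+2,m+3) + ?A$$(0,m+1)*?A$$(m+1,m+3)*?A$$(m+2,0) + ?A$$(0,m+3)*?A$$(m+1,0)*?A$$(m+2,m+1) - ?A$$(0,m+3)*?A$$(m+1,m+1)*?A$$(m+2,0) = c*(q-c)*(p-c)"
    unfolding E by (simp add: algebra_simps power2_eq_square)
  have R5: "?A$$(0,0)*?A$$(m+1,m+1)*?A$$(m+2,m+3) - ?A$$(0,0)*?A$$(m+1,m+3)*?A$$(m+2,m+1) - ?A$$(0,m+1)*?A$$(m+1,0)*?A$$(m+2,m+3) + ?A$$(0,m+1)*?A$$(m+1,m+3)*?A$$(m+2,0) + ?A$$(0,m+3)*?A$$(m+1,0)*?A$$(m+2,m+1) - ?A$$(0,m+3)*?A$$(m+1,m+1)*?A$$(m+2,0) \<noteq> 0 \<Longrightarrow> 3 \<le> vec_space.rank (2*m+2) ?A"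
    by (rule minor3[OF A]) (use m in simp_all)
  have "3 \<le> vec_space.rank (2*m+2) ?A"
  proof (cases "p = a")
    case False
    show ?thesis
    proof (cases "a = 0")
      case False
      show ?thesis by (rule R2, unfold K2) (use \<open>p \<noteq> a\<close> False ac in simp)
    next
      case True
      show ?thesis by (rule R3, unfold K3) (use \<open>p \<noteq> a\<close> True ac in simp)
    qed
  next
    case pa: True
    show ?thesis
    proof (cases "q = c")
      case True
      show ?thesis by (rule R1, unfold K1[OF pa True]) (use pa True ac in simp)
    next
      case qc: False
      show ?thesis
      proof (cases "a = 0")
        case False
        show ?thesis by (rule R4, unfold K4) (use pa qc False ac in simp)
      next
        case True
        show ?thesis by (rule R5, unfold K5) (use pa qc True ac in simp)
      qed
    qed
  qed
  thus ?thesis using mr by simp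
qed


lemma upper:
  assumes m: "m \<ge> 3"
  shows "mat_rank (univ_adj_mat (2*m+2) (join_graph (Suc m) m) 1 (-1/m) 0 (1/m)) \<le> 3"
proof -
  let ?A = "univ_adj_mat (2*m+2) (join_graph (Suc m) m) 1 (-1/m) 0 (1/m)"
  define f1 where "f1 = (\<lambda>i::nat. if i \<le> m \<or> i = 2*m+1 then 1 else (0::real))"
  define g1 where "g1 = (\<lambda>j::nat. if j \<le> m then 1 else (0::real))"
  define f2 where "f2 = (\<lambda>i::nat. (1::real))"
  define g2 where "g2 = (\<lambda>j::nat. if j = 2*m+1 then 1 else (0::real))"
  define f3 where "f3 = (\<lambda>i::nat. if i = 2*m+1 then 1 else (0::real))"
  define g3 where "g3 = (\<lambda>j::nat. if m < j then 1 else (0::real))"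
  define M1 where "M1 = mat (2*m+2) (2*m+2) (\<lambda>(i,j). f1 i * g1 j)"
  define M2 where "M2 = mat (2*m+2) (2*m+2) (\<lambda>(i,j). f2 i * g2 j)"
  define M3 where "M3 = mat (2*m+2) (2*m+2) (\<lambda>(i,j). f3 i * g3 j)"
  have c1: "M1 \<in> carrier_mat (2*m+2) (2*m+2)" "M2 \<in> carrier_mat (2*m+2) (2*m+2)"
    "M3 \<in> carrier_mat (2*m+2) (2*m+2)" unfolding M1_def M2_def M3_def by auto
  have mpos: "real m \<noteq> 0" using m by simp
  have eq: "?A = M1 + M2 + M3"
  proof (rule eq_matI)
    fix i j assume "i < dim_row (M1 + M2 + M3)" "j < dim_col (M1 + M2 + M3)"
    hence ij: "i < 2*m+2" "j < 2*m+2" using c1 by auto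
    show "?A $$ (i,j) = (M1 + M2 + M3) $$ (i,j)"
      apply (subst entry[OF ij])
      using ij mpos unfolding M1_def M2_def M3_def f1_def g1_def f2_def g2_def f3_def g3_def
      by (auto simp: field_simps)
  qed (use c1 in \<open>auto simp: univ_adj_mat_def adj_mat_def ones_mat_def deg_mat_def\<close>)
  have r1: "vec_space.rank (2*m+2) M1 \<le> 1"
    by (rule vec_space.rank_le_1_product_entries[where f=f1 and g=g1, OF c1(1)]) (auto simp: M1_def)
  have r2: "vec_space.rank (2*m+2) M2 \<le> 1"
    by (rule vec_space.rank_le_1_product_entries[where f=f2 and g=g2, OF c1(2)]) (auto simp: M2_def)
  have r3: "vec_space.rank (2*m+2) M3 \<le> 1"
    by (rule vec_space.rank_le_1_product_entries[where f=f3 and g=g3, OF c1(3)]) (auto simp: M3_def)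
  have c12: "M1 + M2 \<in> carrier_mat (2*m+2) (2*m+2)" using c1 by auto
  have "vec_space.rank (2*m+2) (M1 + M2 + M3) \<le> vec_space.rank (2*m+2) (M1 + M2) + vec_space.rank (2*m+2) M3"
    by (rule vec_space.rank_subadditive[OF c12 c1(3)])
  moreover have "vec_space.rank (2*m+2) (M1 + M2) \<le> vec_space.rank (2*m+2) M1 + vec_space.rank (2*m+2) M2"
    by (rule vec_space.rank_subadditive[OF c1(1) c1(2)])
  ultimately have "vec_space.rank (2*m+2) (M1 + M2 + M3) \<le> 3" using r1 r2 r3 by linarith
  moreover have "dim_row ?A = 2*m+2" by (rule carrier_matD(1)[OF dims])
  ultimately show ?thesis unfolding mat_rank_def eq[symmetric] by simp
qed

lemma mur_main:
  assumes m: "m \<ge> 3"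
  shows "mur (2*m+2) (join_graph (Suc m) m) = 3"
  unfolding mur_def
proof (rule Least_equality)
  show "\<exists>\<alpha> \<beta> \<gamma> \<delta>. \<alpha> \<noteq> 0 \<and> mat_rank (univ_adj_mat (2*m+2) (join_graph (Suc m) m) \<alpha> \<beta> \<gamma> \<delta>) = 3"
    using upper[OF m] lower[OF m, of 1 "-1/m" 0 "1/m"] by (intro exI[of _ 1] exI[of _ "-1/m"] exI[of _ 0] exI[of _ "1/m"]) simp
next
  fix y assume "\<exists>\<alpha> \<beta> \<gamma> \<delta>. \<alpha> \<noteq> 0 \<and> mat_rank (univ_adj_mat (2*m+2) (join_graph (Suc m) m) \<alpha> \<beta> \<gamma> \<delta>) = y"
  then show "3 \<le> y" using lower[OF m] by blast
qed

theorem theorem22: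
  fixes r s :: int
  assumes "s \<ge> 3" and "s - r + 1 = 0"
  shows "mur (nat (r + s + 1)) (join_graph (nat r) (nat s)) = 3"
proof -
  define m where "m = nat s"
  have m3: "m \<ge> 3" and e1: "nat (r + s + 1) = 2*m+2" and e2: "nat r = Suc m" and e3: "nat s = m"
    using assms unfolding m_def by arith+
  show ?thesis unfolding e1 e2 e3 by (rule mur_main[OF m3])
qed


end
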